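(* Let $p\in(0,1)$ and $u\in(0,1)$ with $u\ne p$. Let $S_0(x)=u+(1-u)x$, $S_1(x)=ux$, and let $\mu_u$ be the unique probability measure on $[0,1]$ satisfying $\mu_u=(1-p)\mu_u\circ S_0^{-1}+p\,\mu_u\circ S_1^{-1}$ (equivalently, the law of $\Theta_\infty(u)=\sum_{k\ge0}u^{T_k}((1-u)/u)^k$, where $T_k=G_0+\dots+G_k$ with $G_i$ IID, $P(G_0=n)=p^{n-1}(1-p)$, $n\ge1$). Then $\mu_u$ is singular with respect to Lebesgue measure. *)

theory Defs
  imports "HOL-Probability.Probability"
begin

definition singular_lebesgue :: "real measure \<Rightarrow> bool" where
  "singular_lebesgue M \<longleftrightarrow>
     (\<exists>N \<in> sets borel. emeasure lborel N = 0 \<and> emeasure M (space M - N) = 0)"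

end

theory Submission imports Defs begin

lemma ss_nn_integral:
  fixes M :: "real measure" and S0 S1 :: "real \<Rightarrow> real" and c0 c1 :: ennreal
  assumes sM: "sets M = sets borel"
    and S[measurable]: "S0 \<in> borel_measurable borel" "S1 \<in> borel_measurable borel"
    and ss: "\<And>A. A \<in> sets borel \<Longrightarrow> emeasure M A = c0 * emeasure M (S0 -` A) + c1 * emeasure M (S1 -` A)"
    and f: "f \<in> borel_measurable borel"
  shows "(\<integral>\<^sup>+x. f x \<partial>M) = c0 * (\<integral>\<^sup>+x. f (S0 x) \<partial>M) + c1 * (\<integral>\<^sup>+x. f (S1 x) \<partial>M)"
  using f
proof (induct rule: borel_measurable_induct)
  case (cong f g)
  have "(\<integral>\<^sup>+x. f x \<partial>M) = (\<integral>\<^sup>+x. g x \<partial>M)" by (simp add: cong)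
  moreover have "(\<lambda>x. f (S0 x)) = (\<lambda>x. g (S0 x))" "(\<lambda>x. f (S1 x)) = (\<lambda>x. g (S1 x))" by (auto simp: cong)
  ultimately show ?case using cong by simp
next
  case (set A)
  have [measurable]: "A \<in> sets borel" using set by simp
  have m0: "S0 -` A \<in> sets M" "S1 -` A \<in> sets M" unfolding sM
    using measurable_sets[OF S(1) \<open>A \<in> sets borel\<close>] measurable_sets[OF S(2) \<open>A \<in> sets borel\<close>] by auto
  have "(\<lambda>x. indicator A (S0 x) :: ennreal) = indicator (S0 -` A)"
       "(\<lambda>x. indicator A (S1 x) :: ennreal) = indicator (S1 -` A)" by (auto simp: indicator_def)
  then show ?case using m0 ss[of A] sM by simp
next
  case (mult u c)
  have [measurable]: "u \<in> borel_measurable M" using mult sM by (simp cong: measurable_cong_sets)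
  have [measurable]: "(\<lambda>x. u (S0 x)) \<in> borel_measurable M" "(\<lambda>x. u (S1 x)) \<in> borel_measurable M"
    using mult sM by (simp_all cong: measurable_cong_sets)
  show ?case using mult by (simp add: nn_integral_cmult algebra_simps)
next
  case (add u v)
  have [measurable]: "u \<in> borel_measurable M" "v \<in> borel_measurable M" using add sM by (simp_all cong: measurable_cong_sets)
  have [measurable]: "(\<lambda>x. u (S0 x)) \<in> borel_measurable M" "(\<lambda>x. u (S1 x)) \<in> borel_measurable M"
    "(\<lambda>x. v (S0 x)) \<in> borel_measurable M" "(\<lambda>x. v (S1 x)) \<in> borel_measurable M"
    using add sM by (simp_all cong: measurable_cong_sets)
  show ?case using add by (simp add: nn_integral_add algebra_simps distrib_left)
next
  case (seq U)
  have [measurable]: "U i \<in> borel_measurable M" for i using seq sM by (simp cong: measurable_cong_sets)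
  have [measurable]: "(\<lambda>x. U i (S0 x)) \<in> borel_measurable M" "(\<lambda>x. U i (S1 x)) \<in> borel_measurable M" for i
    using seq sM by (simp_all cong: measurable_cong_sets)
  have i0: "incseq (\<lambda>i x. U i (S0 x))" "incseq (\<lambda>i x. U i (S1 x))"
    using seq(4) by (auto simp: incseq_def le_fun_def)
  have "(\<integral>\<^sup>+x. (SUP i. U i) x \<partial>M) = (SUP i. \<integral>\<^sup>+x. U i x \<partial>M)"
    using seq(4) by (simp add: nn_integral_monotone_convergence_SUP image_comp)
  also have "\<dots> = (SUP i. c0 * (\<integral>\<^sup>+x. U i (S0 x) \<partial>M) + c1 * (\<integral>\<^sup>+x. U i (S1 x) \<partial>M))"
    using seq(3) by simp
  also have "\<dots> = (SUP i. c0 * (\<integral>\<^sup>+x. U i (S0 x) \<partial>M)) + (SUP i. c1 * (\<integral>\<^sup>+x. U i (S1 x) \<partial>M))"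
    proof (rule ennreal_SUP_add)
    show "incseq (\<lambda>i. c0 * (\<integral>\<^sup>+x. U i (S0 x) \<partial>M))" "incseq (\<lambda>i. c1 * (\<integral>\<^sup>+x. U i (S1 x) \<partial>M))"
      using i0 by (auto simp: incseq_def le_fun_def intro!: mult_left_mono nn_integral_mono)
  qed
  also have "\<dots> = c0 * (SUP i. (\<integral>\<^sup>+x. U i (S0 x) \<partial>M)) + c1 * (SUP i. (\<integral>\<^sup>+x. U i (S1 x) \<partial>M))"
    by (simp add: SUP_mult_left_ennreal)
  also have "\<dots> = c0 * (\<integral>\<^sup>+x. (SUP i. U i (S0 x)) \<partial>M) + c1 * (\<integral>\<^sup>+x. (SUP i. U i (S1 x)) \<partial>M)"
    using i0 by (simp add: nn_integral_monotone_convergence_SUP)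
  finally show ?case by (simp add: image_comp)
qed


fun lr :: "real \<Rightarrow> real \<Rightarrow> real \<Rightarrow> nat \<Rightarrow> real \<Rightarrow> real" where
  "lr u a0 a1 0 x = 1"
| "lr u a0 a1 (Suc n) x = (if x < u then a1 * lr u a0 a1 n (x / u) else a0 * lr u a0 a1 n ((x - u) / (1 - u)))"

lemma lr_meas[measurable]: "lr u a0 a1 n \<in> borel_measurable borel"
proof (induction n)
  case 0 then show ?case by simp
next
  case (Suc n)
  note [measurable] = Suc
  have "(\<lambda>x. if x < u then a1 * lr u a0 a1 n (x / u) else a0 * lr u a0 a1 n ((x - u) / (1 - u))) \<in> borel_measurable borel"
    by measurable
  then show ?case by (simp add: fun_eq_iff)
qed

lemma lr_nonneg: "0 \<le> a0 \<Longrightarrow> 0 \<le> a1 \<Longrightarrow> 0 \<le> lr u a0 a1 n x"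
  by (induction n arbitrary: x) auto

lemma lr_inv: "a0 * b0 = 1 \<Longrightarrow> a1 * b1 = 1 \<Longrightarrow> lr u a0 a1 n x * lr u b0 b1 n x = 1"
proof (induction n arbitrary: x)
  case 0 then show ?case by simp
next
  case (Suc n)
  then show ?case by (auto simp: algebra_simps)
qed

lemma ss_lr:
  fixes M :: "real measure" and q u a0 a1 :: real
  assumes sM: "sets M = sets borel"
    and u: "0 < u" "u < 1" and q: "0 \<le> q" "q \<le> 1" and a: "0 \<le> a0" "0 \<le> a1"
    and out: "emeasure M (UNIV - {0..<1}) = 0"
    and ss: "\<And>A. A \<in> sets borel \<Longrightarrow> emeasure M A =
       ennreal (1 - q) * emeasure M ((\<lambda>x. u + (1 - u) * x) -` A) + ennreal q * emeasure M ((\<lambda>x. u * x) -` A)"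
  shows "(\<integral>\<^sup>+x. ennreal (lr u a0 a1 n x) \<partial>M) = ennreal (((1 - q) * a0 + q * a1) ^ n) * emeasure M UNIV"
proof (induction n)
  case 0
  have "space M = UNIV" using sets_eq_imp_space_eq[OF sM] by simp
  then show ?case by simp
next
  case (Suc n)
  have ae: "AE x in M. x \<in> {0..<1}"
    using out sM by (intro AE_I[where N="UNIV - {0..<1}"]) (auto simp: sets_eq_imp_space_eq[OF sM])
  have "(\<integral>\<^sup>+x. ennreal (lr u a0 a1 (Suc n) x) \<partial>M) =
      ennreal (1 - q) * (\<integral>\<^sup>+x. ennreal (lr u a0 a1 (Suc n) (u + (1 - u) * x)) \<partial>M) +
      ennreal q * (\<integral>\<^sup>+x. ennreal (lr u a0 a1 (Suc n) (u * x)) \<partial>M)"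
    by (rule ss_nn_integral[OF sM _ _ ss]) auto
  also have "(\<integral>\<^sup>+x. ennreal (lr u a0 a1 (Suc n) (u + (1 - u) * x)) \<partial>M) =
      (\<integral>\<^sup>+x. ennreal a0 * ennreal (lr u a0 a1 n x) \<partial>M)"
  proof (rule nn_integral_cong_AE)
    show "AE x in M. ennreal (lr u a0 a1 (Suc n) (u + (1 - u) * x)) = ennreal a0 * ennreal (lr u a0 a1 n x)"
      using ae
    proof eventually_elim
      case (elim x)
      then have "\<not> u + (1 - u) * x < u" using u by (auto simp: not_less)
      moreover have "(u + (1 - u) * x - u) / (1 - u) = x" using u by (simp add: field_simps)
      ultimately show ?case using a by (simp add: ennreal_mult lr_nonneg)
    qed
  qed
  also have "(\<integral>\<^sup>+x. ennreal (lr u a0 a1 (Suc n) (u * x)) \<partial>M) =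
      (\<integral>\<^sup>+x. ennreal a1 * ennreal (lr u a0 a1 n x) \<partial>M)"
  proof (rule nn_integral_cong_AE)
    show "AE x in M. ennreal (lr u a0 a1 (Suc n) (u * x)) = ennreal a1 * ennreal (lr u a0 a1 n x)"
      using ae
    proof eventually_elim
      case (elim x)
      then have "u * x < u" using u by auto
      moreover have "u * x / u = x" using u by simp
      ultimately show ?case using a by (simp add: ennreal_mult lr_nonneg)
    qed
  qed
  also have "ennreal (1 - q) * (\<integral>\<^sup>+x. ennreal a0 * ennreal (lr u a0 a1 n x) \<partial>M) +
      ennreal q * (\<integral>\<^sup>+x. ennreal a1 * ennreal (lr u a0 a1 n x) \<partial>M)
      = (ennreal (1 - q) * ennreal a0 + ennreal q * ennreal a1) * (\<integral>\<^sup>+x. ennreal (lr u a0 a1 n x) \<partial>M)"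
    using sM by (simp add: nn_integral_cmult measurable_cong_sets[OF sM refl] algebra_simps)
  also have "\<dots> = ennreal (((1 - q) * a0 + q * a1) ^ Suc n) * emeasure M UNIV"
  proof -
    define c where "c = (1 - q) * a0 + q * a1"
    have c0: "0 \<le> c" using q a by (simp add: c_def)
    have "ennreal (1 - q) * ennreal a0 + ennreal q * ennreal a1 = ennreal c"
      using q a by (simp add: c_def ennreal_mult[symmetric] ennreal_plus[symmetric] del: ennreal_plus)
    moreover have "ennreal (c ^ Suc n) = ennreal c * ennreal (c ^ n)"
      using c0 by (simp add: ennreal_mult[symmetric])
    ultimately show ?thesis using Suc by (simp add: c_def mult.assoc)
  qed
  finally show ?case .
qed


lemma leb_affine:
  fixes B :: "real set" and c t :: real
  assumes B[measurable]: "B \<in> sets borel" and c: "0 < c"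
  shows "emeasure lborel B = ennreal c * emeasure lborel ((\<lambda>x. t + c * x) -` B)"
proof -
  have m: "(\<lambda>x. t + c * x) -` B \<in> sets borel"
    using measurable_sets[OF _ B, of "\<lambda>x. t + c * x" borel] by auto
  have "(\<integral>\<^sup>+x. indicator B x \<partial>lborel) = ennreal \<bar>c\<bar> * (\<integral>\<^sup>+x. indicator B (t + c * x) \<partial>lborel)"
    by (rule nn_integral_real_affine) (use c in auto)
  moreover have "(\<lambda>x. indicator B (t + c * x) :: ennreal) = indicator ((\<lambda>x. t + c * x) -` B)"
    by (auto simp: indicator_def)
  ultimately show ?thesis using c m by simp
qed

definition L01 :: "real measure" where "L01 = density lborel (indicator {0..1})"

lemma sets_L01[simp]: "sets L01 = sets borel" by (simp add: L01_def)

lemma emeasure_L01: "A \<in> sets borel \<Longrightarrow> emeasure L01 A = emeasure lborel (A \<inter> {0..1})"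
proof -
  assume [measurable]: "A \<in> sets borel"
  have "emeasure L01 A = (\<integral>\<^sup>+x. indicator {0..1} x * indicator A x \<partial>lborel)"
    unfolding L01_def by (rule emeasure_density) auto
  also have "(\<lambda>x. indicator {0..1} x * indicator A x :: ennreal) = indicator (A \<inter> {0..1})"
    by (auto simp: indicator_def)
  finally show ?thesis by simp
qed

lemma L01_ss:
  fixes u :: real assumes u: "0 < u" "u < 1" and A[measurable]: "A \<in> sets borel"
  shows "emeasure L01 A = ennreal (1 - u) * emeasure L01 ((\<lambda>x. u + (1 - u) * x) -` A) + ennreal u * emeasure L01 ((\<lambda>x. u * x) -` A)"
proof -
  have m0: "(\<lambda>x. u + (1 - u) * x) -` A \<in> sets borel"
    using measurable_sets[OF _ A, of "\<lambda>x. u + (1 - u) * x" borel] by auto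
  have m1: "(\<lambda>x. u * x) -` A \<in> sets borel"
    using measurable_sets[OF _ A, of "\<lambda>x. u * x" borel] by auto
  have e0: "(\<lambda>x. u + (1 - u) * x) -` (A \<inter> {u..1}) = (\<lambda>x. u + (1 - u) * x) -` A \<inter> {0..1}"
  proof -
    have "u \<le> u + (1 - u) * x \<and> u + (1 - u) * x \<le> 1 \<longleftrightarrow> 0 \<le> x \<and> x \<le> 1" for x
    proof -
      have "u + (1 - u) * x \<le> 1 \<longleftrightarrow> (1 - u) * x \<le> (1 - u) * 1" by (simp add: algebra_simps)
      also have "\<dots> \<longleftrightarrow> x \<le> 1" using u by (simp add: mult_le_cancel_left)
      finally show ?thesis using u by (simp add: zero_le_mult_iff)
    qed
    then show ?thesis by auto
  qed
  have e1: "(\<lambda>x. u * x) -` (A \<inter> {0..u}) = (\<lambda>x. u * x) -` A \<inter> {0..1}"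
  proof -
    have "0 \<le> u * x \<and> u * x \<le> u \<longleftrightarrow> 0 \<le> x \<and> x \<le> 1" for x
    proof -
      have "u * x \<le> u * 1 \<longleftrightarrow> x \<le> 1" using u by (simp add: mult_le_cancel_left)
      then show ?thesis using u by (simp add: zero_le_mult_iff)
    qed
    then show ?thesis by auto
  qed
  have "emeasure lborel (A \<inter> {u..1}) = ennreal (1 - u) * emeasure lborel ((\<lambda>x. u + (1 - u) * x) -` (A \<inter> {u..1}))"
    by (rule leb_affine) (use u in auto)
  then have h0: "emeasure lborel (A \<inter> {u..1}) = ennreal (1 - u) * emeasure L01 ((\<lambda>x. u + (1 - u) * x) -` A)"
    using e0 m0 by (simp add: emeasure_L01)
  have "emeasure lborel (A \<inter> {0..u}) = ennreal u * emeasure lborel ((\<lambda>x. 0 + u * x) -` (A \<inter> {0..u}))"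
    by (rule leb_affine) (use u in auto)
  then have h1: "emeasure lborel (A \<inter> {0..u}) = ennreal u * emeasure L01 ((\<lambda>x. u * x) -` A)"
    using e1 m1 by (simp add: emeasure_L01)
  have "A \<inter> {0..u} = (A \<inter> {0..<u}) \<union> (A \<inter> {u})" using u by auto
  then have h2: "emeasure lborel (A \<inter> {0..u}) = emeasure lborel (A \<inter> {0..<u})"
  proof -
    have n: "A \<inter> {u} \<in> null_sets lborel"
    proof (rule null_sets_subset[of "{u}"])
      show "{u} \<in> null_sets lborel" by (simp add: null_setsI)
    qed auto
    have "emeasure lborel ((A \<inter> {0..<u}) \<union> (A \<inter> {u})) = emeasure lborel (A \<inter> {0..<u})"
      by (rule emeasure_Un_null_set[OF _ n]) simp
    then show ?thesis using \<open>A \<inter> {0..u} = _\<close> by simp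
  qed
  have "A \<inter> {0..1} = (A \<inter> {0..<u}) \<union> (A \<inter> {u..1})" using u by auto
  then have "emeasure lborel (A \<inter> {0..1}) = emeasure lborel (A \<inter> {0..<u}) + emeasure lborel (A \<inter> {u..1})"
    by (simp add: plus_emeasure[symmetric] disjoint_iff)
  then show ?thesis using h0 h1 h2 by (simp add: emeasure_L01 add.commute)
qed


lemma sqrt_scale: "0 < a \<Longrightarrow> 0 \<le> b \<Longrightarrow> a * sqrt (b / a) = sqrt (a * b)"
  by (metis less_eq_real_def real_div_sqrt real_sqrt_divide real_sqrt_mult times_divide_eq_left
      times_divide_eq_right real_sqrt_gt_zero)

lemma rho_lt1:
  fixes p u :: real assumes "0 < p" "p < 1" "0 < u" "u < 1" "u \<noteq> p"
  shows "sqrt (p * u) + sqrt ((1 - p) * (1 - u)) < 1"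
proof -
  have "sqrt p \<noteq> sqrt u" using assms by simp
  then have "0 < (sqrt p - sqrt u)^2" by simp
  then have h1: "2 * sqrt (p * u) < p + u" using assms
    by (simp add: power2_eq_square algebra_simps real_sqrt_mult)
  have "0 \<le> (sqrt (1 - p) - sqrt (1 - u))^2" by simp
  then have h2': "2 * (sqrt (1 - p) * sqrt (1 - u)) \<le> (1 - p) + (1 - u)" using assms
    by (simp add: power2_eq_square algebra_simps)
  have h2: "2 * sqrt ((1 - p) * (1 - u)) \<le> (1 - p) + (1 - u)"
    using h2' by (simp only: real_sqrt_mult)
  show ?thesis using h1 h2 by linarith
qed

theorem proposition5:
  fixes p u :: real and \<mu> :: "real measure"
  assumes "0 < p" "p < 1" "0 < u" "u < 1" "u \<noteq> p"
    and "prob_space \<mu>" "sets \<mu> = sets borel"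
    and "emeasure \<mu> {0..1} = 1"
    and "\<And>A. A \<in> sets borel \<Longrightarrow>
           emeasure \<mu> A =
             ennreal (1 - p) * emeasure \<mu> ((\<lambda>x. u + (1 - u) * x) -` A)
             + ennreal p * emeasure \<mu> ((\<lambda>x. u * x) -` A)"
  shows "singular_lebesgue \<mu>"
proof -
  note pu = assms(1-5)
  have sM: "sets \<mu> = sets borel" by fact
  have sp: "space \<mu> = UNIV" using sets_eq_imp_space_eq[OF sM] by simp
  interpret P: prob_space \<mu> by fact
  have m01[measurable]: "{0..1::real} \<in> sets \<mu>" using sM by simp
  have mc[measurable]: "UNIV - {0..1::real} \<in> sets \<mu>" using sets.compl_sets[OF m01] sp by simp
  have out: "emeasure \<mu> (UNIV - {0..1}) = 0"
    using emeasure_compl[OF m01] assms(8) sp P.emeasure_space_1 by simp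
  have one: "emeasure \<mu> {1} = 0"
  proof -
    have "(\<lambda>x. u + (1 - u) * x) -` {1} = {1}"
    proof (auto)
      fix x assume "u + (1 - u) * x = 1"
      then have "(1 - u) * (x - 1) = 0" by (simp add: algebra_simps)
      then show "x = 1" using pu by simp
    qed
    moreover have "(\<lambda>x. u * x) -` {1} = {1/u}" using pu by (auto simp: field_simps)
    moreover have "emeasure \<mu> {1/u} = 0"
    proof -
      have "1/u > 1" using pu by simp
      then have "{1/u} \<subseteq> UNIV - {0..1}" by auto
      then have "emeasure \<mu> {1/u} \<le> emeasure \<mu> (UNIV - {0..1})"
        by (intro emeasure_mono mc)
      then show ?thesis using out by simp
    qed
    ultimately have e: "emeasure \<mu> {1} = ennreal (1 - p) * emeasure \<mu> {1}"
      using assms(9)[of "{1}"] by simp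
    have "ennreal (measure \<mu> {1}) = ennreal ((1 - p) * measure \<mu> {1})"
      using e pu by (simp add: P.emeasure_eq_measure ennreal_mult)
    then have "measure \<mu> {1} = (1 - p) * measure \<mu> {1}" using pu by (subst (asm) ennreal_inj) auto
    then have "measure \<mu> {1} = 0" using pu by (simp add: algebra_simps)
    then show ?thesis by (simp add: P.emeasure_eq_measure)
  qed
  have outM: "emeasure \<mu> (UNIV - {0..<1}) = 0"
  proof -
    have "UNIV - {0..<1} = (UNIV - {0..1}) \<union> {1::real}" by auto
    then have "emeasure \<mu> (UNIV - {0..<1}) \<le> emeasure \<mu> (UNIV - {0..1}) + emeasure \<mu> {1}"
      by (metis emeasure_subadditive sets.compl_sets m01 sp sM sets_lborel borel_singleton
          sets.empty_sets)
    then show ?thesis using out one by simp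
  qed
  have outL: "emeasure L01 (UNIV - {0..<1}) = 0"
  proof -
    have "(UNIV - {0..<1}) \<inter> {0..1} = {1::real}" by auto
    then show ?thesis by (simp add: emeasure_L01)
  qed
  have L1: "emeasure L01 UNIV = 1" by (simp add: emeasure_L01)
  define \<rho> where "\<rho> = sqrt (p * u) + sqrt ((1 - p) * (1 - u))"
  have \<rho>1: "\<rho> < 1" unfolding \<rho>_def by (rule rho_lt1[OF pu])
  have \<rho>0: "0 \<le> \<rho>" unfolding \<rho>_def using pu by simp
  define a0 where "a0 = sqrt ((1 - p) / (1 - u))"
  define a1 where "a1 = sqrt (p / u)"
  define b0 where "b0 = sqrt ((1 - u) / (1 - p))"
  define b1 where "b1 = sqrt (u / p)"
  have a: "0 \<le> a0" "0 \<le> a1" "0 \<le> b0" "0 \<le> b1" using pu by (auto simp: a0_def a1_def b0_def b1_def)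
  have ab: "a0 * b0 = 1" "a1 * b1 = 1"
    using pu by (auto simp: a0_def a1_def b0_def b1_def real_sqrt_mult[symmetric])
  have ra: "(1 - u) * a0 + u * a1 = \<rho>"
    using pu by (simp add: a0_def a1_def \<rho>_def sqrt_scale mult.commute)
  have rb: "(1 - p) * b0 + p * b1 = \<rho>"
    using pu by (simp add: b0_def b1_def \<rho>_def sqrt_scale mult.commute)
  have IL: "(\<integral>\<^sup>+x. ennreal (lr u a0 a1 n x) \<partial>L01) = ennreal (\<rho> ^ n)" for n
    using ss_lr[OF sets_L01 pu(3,4) _ _ a(1,2) outL L01_ss[OF pu(3,4)]] pu ra L1 by simp
  have IM: "(\<integral>\<^sup>+x. ennreal (lr u b0 b1 n x) \<partial>\<mu>) = ennreal (\<rho> ^ n)" for n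
    using ss_lr[OF sM pu(3,4) _ _ a(3,4) outM assms(9)] pu rb P.emeasure_space_1 sp by simp
  define A where "A n = {x \<in> {0..1}. 1 \<le> lr u a0 a1 n x}" for n
  define B where "B n = {x \<in> {0..1}. lr u a0 a1 n x < 1}" for n
  have Am[measurable]: "A n \<in> sets borel" for n unfolding A_def by measurable
  have Bm[measurable]: "B n \<in> sets borel" for n unfolding B_def by measurable
  have EA: "emeasure lborel (A n) \<le> ennreal (\<rho> ^ n)" for n
  proof -
    have "A n = {x \<in> {0..1}. 1 \<le> 1 * ennreal (lr u a0 a1 n x)}"
      using a by (auto simp: A_def)
    then have "emeasure lborel (A n) \<le> 1 * (\<integral>\<^sup>+x. ennreal (lr u a0 a1 n x) * indicator {0..1} x \<partial>lborel)"
      by (simp only:) (rule nn_integral_Markov_inequality; simp)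
    also have "(\<integral>\<^sup>+x. ennreal (lr u a0 a1 n x) * indicator {0..1} x \<partial>lborel) =
       (\<integral>\<^sup>+x. ennreal (lr u a0 a1 n x) \<partial>L01)"
      unfolding L01_def by (subst nn_integral_density) (auto simp: mult.commute)
    finally show ?thesis using IL by simp
  qed
  have EB: "emeasure \<mu> (B n) \<le> ennreal (\<rho> ^ n)" for n
  proof -
    have "B n \<subseteq> {x \<in> {0..1}. 1 \<le> 1 * ennreal (lr u b0 b1 n x)}"
    proof
      fix x assume "x \<in> B n"
      then have x: "x \<in> {0..1}" "lr u a0 a1 n x < 1" by (auto simp: B_def)
      have pr: "lr u a0 a1 n x * lr u b0 b1 n x = 1" by (rule lr_inv[OF ab])
      have "0 \<le> lr u a0 a1 n x" using a by (simp add: lr_nonneg)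
      then have "1 \<le> lr u b0 b1 n x" using x(2) pr
        by (metis less_eq_real_def mult_le_cancel_right1 mult.commute nle_le lr_nonneg a(3,4)
            mult_less_cancel_right1 not_le)
      then show "x \<in> {x \<in> {0..1}. 1 \<le> 1 * ennreal (lr u b0 b1 n x)}" using x by simp
    qed
    then have "emeasure \<mu> (B n) \<le> emeasure \<mu> {x \<in> {0..1}. 1 \<le> 1 * ennreal (lr u b0 b1 n x)}"
      by (intro emeasure_mono) (auto simp: sM)
    also have "\<dots> \<le> 1 * (\<integral>\<^sup>+x. ennreal (lr u b0 b1 n x) * indicator {0..1} x \<partial>\<mu>)"
      by (rule nn_integral_Markov_inequality) (auto simp: measurable_cong_sets[OF sM refl])
    also have "\<dots> \<le> (\<integral>\<^sup>+x. ennreal (lr u b0 b1 n x) \<partial>\<mu>)"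
      by (auto intro!: nn_integral_mono simp: indicator_def)
    finally show ?thesis using IM by simp
  qed
  have sumr: "summable (\<lambda>n. \<rho> ^ n)" using \<rho>0 \<rho>1 by (simp add: summable_geometric)
  have NA: "limsup A \<in> null_sets lborel"
  proof (rule borel_cantelli_limsup1)
    show "A n \<in> sets lborel" for n by simp
    show "emeasure lborel (A n) < \<infinity>" for n using EA[of n] by (simp add: le_less_trans)
    show "summable (\<lambda>n. measure lborel (A n))"
    proof (rule summable_comparison_test'[OF sumr])
      fix n
      have "measure lborel (A n) \<le> \<rho> ^ n"
        using enn2real_mono[OF EA[of n]] \<rho>0 by (simp add: measure_def)
      then show "norm (measure lborel (A n)) \<le> \<rho> ^ n" by simp
    qed
  qed
  have NB: "limsup B \<in> null_sets \<mu>"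
  proof (rule borel_cantelli_limsup1)
    show "B n \<in> sets \<mu>" for n by (simp add: sM)
    show "emeasure \<mu> (B n) < \<infinity>" for n using EB[of n] by (simp add: le_less_trans)
    show "summable (\<lambda>n. measure \<mu> (B n))"
    proof (rule summable_comparison_test'[OF sumr])
      fix n
      have "measure \<mu> (B n) \<le> \<rho> ^ n"
        using enn2real_mono[OF EB[of n]] \<rho>0 by (simp add: measure_def)
      then show "norm (measure \<mu> (B n)) \<le> \<rho> ^ n" by simp
    qed
  qed
  have sub: "space \<mu> - limsup A \<subseteq> (UNIV - {0..1}) \<union> limsup B"
  proof
    fix x assume x: "x \<in> space \<mu> - limsup A"
    show "x \<in> (UNIV - {0..1}) \<union> limsup B"
    proof (cases "x \<in> {0..1}")
      case True
      from x obtain n where n: "\<forall>m\<ge>n. x \<notin> A m" by (auto simp: limsup_INF_SUP)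
      have "x \<in> B m" if "m \<ge> n" for m using n that True by (auto simp: A_def B_def)
      then have "x \<in> limsup B" unfolding limsup_INF_SUP
        by auto (metis atLeast_iff max.cobounded1 max.cobounded2)
      then show ?thesis by simp
    qed simp
  qed
  have "emeasure \<mu> (space \<mu> - limsup A) \<le> emeasure \<mu> ((UNIV - {0..1}) \<union> limsup B)"
    using sub NB by (intro emeasure_mono) (auto simp: sM)
  also have "\<dots> \<le> emeasure \<mu> (UNIV - {0..1}) + emeasure \<mu> (limsup B)"
    using NB by (intro emeasure_subadditive) (auto simp: sM)
  also have "\<dots> = 0" using out null_setsD1[OF NB] by simp
  finally have "emeasure \<mu> (space \<mu> - limsup A) = 0" by simp
  moreover have "limsup A \<in> sets borel" using null_setsD2[OF NA] by simp
  moreover have "emeasure lborel (limsup A) = 0" using null_setsD1[OF NA] .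
  ultimately show ?thesis unfolding singular_lebesgue_def by blast
qed

end
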